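(* Let $G$ be a countable infinite group and $A$ a finite set. The Bernoulli shift $A^G$ is disjoint from every minimal, proximal $G$-flow. In particular, every minimal proximal $G$-flow has the separated covering property.
   Context: $A^G$ carries the product topology and the action $(g\cdot z)(h)=z(hg)$. A $G$-flow is proximal if for all $y_1,y_2$ there exist $z$ and a net $(g_i)$ in $G$ with $g_iy_1\to z$, $g_iy_2\to z$; minimal if every orbit is dense. Two $G$-flows are disjoint if the only closed invariant subset of their product projecting onto both factors is the whole product. For finite $D\subseteq G$, $S\subseteq G$ is $D$-separated if $Dg\cap Dh=\emptyset$ for distinct $g,h\in S$; a minimal flow $X$ has the separated covering property if for every finite $D\subseteq G$ and non-empty open $U\subseteq X$ there is a $D$-separated $S$ with $S^{-1}U=X$. *)

theory Defs
  imports "HOL-Analysis.Analysis"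
begin

text \<open>Groups are rendered with the type class group_add (not assumed commutative);
  the group operation is written +, the identity 0, inverses -g.
  G carries the discrete topology, so continuity of the action amounts to
  continuity of each map act g.\<close>

definition G_flow :: "'x topology \<Rightarrow> ('g::group_add \<Rightarrow> 'x \<Rightarrow> 'x) \<Rightarrow> bool" where
  "G_flow X act \<longleftrightarrow>
     compact_space X \<and> Hausdorff_space X \<and>
     (\<forall>g. continuous_map X X (act g)) \<and>
     (\<forall>x\<in>topspace X. act 0 x = x) \<and>
     (\<forall>g h. \<forall>x\<in>topspace X. act (g + h) x = act g (act h x))"

definition minimal_flow :: "'x topology \<Rightarrow> ('g::group_add \<Rightarrow> 'x \<Rightarrow> 'x) \<Rightarrow> bool" where
  "minimal_flow X act \<longleftrightarrow>
     (\<forall>x\<in>topspace X. X closure_of (range (\<lambda>g. act g x)) = topspace X)"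

text \<open>Nets in G are rendered as (proper) filters on G.\<close>
definition proximal_flow :: "'x topology \<Rightarrow> ('g::group_add \<Rightarrow> 'x \<Rightarrow> 'x) \<Rightarrow> bool" where
  "proximal_flow X act \<longleftrightarrow>
     (\<forall>y1\<in>topspace X. \<forall>y2\<in>topspace X. \<exists>z\<in>topspace X. \<exists>F :: 'g filter.
        F \<noteq> bot \<and> limitin X (\<lambda>g. act g y1) z F \<and> limitin X (\<lambda>g. act g y2) z F)"

definition disjoint_flows ::
  "'x topology \<Rightarrow> ('g::group_add \<Rightarrow> 'x \<Rightarrow> 'x) \<Rightarrow> 'y topology \<Rightarrow> ('g \<Rightarrow> 'y \<Rightarrow> 'y) \<Rightarrow> bool" where
  "disjoint_flows X actX Y actY \<longleftrightarrow>
     (\<forall>Z. closedin (prod_topology X Y) Z \<and>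
          (\<forall>g. \<forall>(x,y)\<in>Z. (actX g x, actY g y) \<in> Z) \<and>
          fst ` Z = topspace X \<and> snd ` Z = topspace Y
        \<longrightarrow> Z = topspace X \<times> topspace Y)"

definition bernoulli_space :: "'a set \<Rightarrow> ('g \<Rightarrow> 'a) topology" where
  "bernoulli_space A = product_topology (\<lambda>_. discrete_topology A) UNIV"

definition bernoulli_shift :: "'g::group_add \<Rightarrow> ('g \<Rightarrow> 'a) \<Rightarrow> ('g \<Rightarrow> 'a)" where
  "bernoulli_shift g z = (\<lambda>h. z (h + g))"

definition separated :: "'g::group_add set \<Rightarrow> 'g set \<Rightarrow> bool" where
  "separated D S \<longleftrightarrow>
     (\<forall>g\<in>S. \<forall>h\<in>S. g \<noteq> h \<longrightarrow> (\<lambda>d. d + g) ` D \<inter> (\<lambda>d. d + h) ` D = {})"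

definition separated_covering :: "'x topology \<Rightarrow> ('g::group_add \<Rightarrow> 'x \<Rightarrow> 'x) \<Rightarrow> bool" where
  "separated_covering X act \<longleftrightarrow>
     (\<forall>D U. finite D \<and> openin X U \<and> U \<noteq> {} \<longrightarrow>
        (\<exists>S. separated D S \<and> (\<Union>s\<in>S. act (- s) ` U) = topspace X))"

end

theory Submission imports Defs begin

primrec cols :: "(nat \<Rightarrow> 'g::group_add) \<Rightarrow> 'g set \<Rightarrow> nat \<Rightarrow> nat list" where
  "cols e D 0 = []"
| "cols e D (Suc n) = cols e D n @
     [LEAST c. \<forall>m<n. (\<lambda>d. d + e m) ` D \<inter> (\<lambda>d. d + e n) ` D \<noteq> {} \<longrightarrow> cols e D n ! m \<noteq> c]"

lemma length_cols [simp]: "length (cols e D n) = n"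
  by (induction n) auto

lemma cols_stable: "m < n \<Longrightarrow> cols e D n ! m = cols e D (Suc m) ! m"
proof (induction n)
  case 0 then show ?case by simp
next
  case (Suc n)
  show ?case
  proof (cases "m < n")
    case True
    then show ?thesis using Suc by (simp add: nth_append)
  next
    case False
    then have "m = n" using Suc.prems by simp
    then show ?thesis by simp
  qed
qed

lemma least_avoid_bound:
  fixes F :: "nat set"
  assumes "finite F"
  shows "(LEAST c. c \<notin> F) \<notin> F \<and> (LEAST c. c \<notin> F) \<le> card F"
proof -
  have "\<not> {0..card F} \<subseteq> F"
  proof
    assume "{0..card F} \<subseteq> F"
    then have "card {0..card F} \<le> card F" using assms card_mono by blast
    then show False by simp
  qed
  then obtain c where c0: "c \<in> {0..card F}" "c \<notin> F" by blast
  then have c: "c \<le> card F" "c \<notin> F" by auto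
  then show ?thesis using LeastI[of "\<lambda>c. c \<notin> F" c] Least_le[of "\<lambda>c. c \<notin> F" c] by auto
qed

lemma coloring:
  fixes D :: "'g::group_add set"
  assumes "countable (UNIV :: 'g set)" "infinite (UNIV :: 'g set)" "finite D"
  shows "\<exists>N (col::'g \<Rightarrow> nat). (\<forall>g. col g < N) \<and>
           (\<forall>g h. g \<noteq> h \<and> col g = col h \<longrightarrow> (\<lambda>d. d+g)`D \<inter> (\<lambda>d. d+h)`D = {})"
proof -
  define e :: "nat \<Rightarrow> 'g" where "e = from_nat_into UNIV"
  have bij: "bij e" unfolding e_def using bij_betw_from_nat_into[OF assms(1,2)] by simp
  define conf where "conf a b \<longleftrightarrow> (\<lambda>d. d + a) ` D \<inter> (\<lambda>d. d + b) ` D \<noteq> {}" for a b :: 'g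
  define c where "c n = cols e D (Suc n) ! n" for n
  define Fb where "Fb n = {c m | m. m < n \<and> conf (e m) (e n)}" for n
  have cn: "c n = (LEAST k. k \<notin> Fb n)" for n
  proof -
    have "c n = (LEAST k. \<forall>m<n. conf (e m) (e n) \<longrightarrow> cols e D n ! m \<noteq> k)"
      unfolding c_def conf_def by (simp add: nth_append)
    also have "(\<lambda>k. \<forall>m<n. conf (e m) (e n) \<longrightarrow> cols e D n ! m \<noteq> k) = (\<lambda>k. k \<notin> Fb n)"
    proof -
      have cs: "\<And>m. m < n \<Longrightarrow> cols e D n ! m = c m" unfolding c_def by (rule cols_stable)
      show ?thesis unfolding Fb_def using cs by (auto simp del: cols.simps)
    qed
    finally show ?thesis .
  qed
  have confD: "{a. conf a b} \<subseteq> (\<lambda>(d1,d2). - d1 + (d2 + b)) ` (D \<times> D)" for b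
  proof
    fix a assume "a \<in> {a. conf a b}"
    then obtain d1 d2 where "d1 \<in> D" "d2 \<in> D" "d1 + a = d2 + b" unfolding conf_def by auto
    then have "- d1 + (d1 + a) = - d1 + (d2 + b)" by simp
    then have "a = - d1 + (d2 + b)" by (simp only: minus_add_cancel)
    then show "a \<in> (\<lambda>(d1,d2). - d1 + (d2 + b)) ` (D \<times> D)" using \<open>d1 \<in> D\<close> \<open>d2 \<in> D\<close> by force
  qed
  have finconf: "finite {a. conf a b}" for b
    using confD[of b] assms(3) finite_subset by blast
  have cardconf: "card {a. conf a b} \<le> card D * card D" for b
  proof -
    have "card {a. conf a b} \<le> card ((\<lambda>(d1,d2). - d1 + (d2 + b)) ` (D \<times> D))"
      using confD[of b] assms(3) by (intro card_mono) auto
    also have "\<dots> \<le> card (D \<times> D)" by (rule card_image_le) (use assms(3) in auto)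
    finally show ?thesis by (simp add: card_cartesian_product)
  qed
  have inje: "inj e" using bij bij_is_inj by blast
  have Fbsub: "Fb n \<subseteq> c ` e -` {a. conf a (e n)}" for n unfolding Fb_def by auto
  have finpre: "finite (e -` {a. conf a b})" for b
    using finite_vimageI[OF finconf inje] .
  have cardpre: "card (e -` {a. conf a b}) \<le> card D * card D" for b
  proof -
    have "card (e -` {a. conf a b}) = card (e ` (e -` {a. conf a b}))"
      by (rule card_image[symmetric]) (rule inj_on_subset[OF inje subset_UNIV])
    also have "\<dots> \<le> card {a. conf a b}" by (rule card_mono[OF finconf]) auto
    finally show ?thesis using cardconf[of b] by simp
  qed
  have finFb: "finite (Fb n)" for n using Fbsub finite_subset finpre by blast
  have cardFb: "card (Fb n) \<le> card D * card D" for n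
  proof -
    have "card (Fb n) \<le> card (c ` e -` {a. conf a (e n)})"
      by (rule card_mono) (use Fbsub finpre in auto)
    also have "\<dots> \<le> card (e -` {a. conf a (e n)})" by (rule card_image_le[OF finpre])
    finally show ?thesis using cardpre[of "e n"] by simp
  qed
  have cnot: "c n \<notin> Fb n" and cle: "c n \<le> card (Fb n)" for n
    using least_avoid_bound[OF finFb[of n]] unfolding cn[of n, symmetric] by blast+
  have cbound: "c n < card D * card D + 1" for n
    using cle[of n] cardFb[of n] by linarith
  have cdiff: "c m \<noteq> c n" if "m < n" "conf (e m) (e n)" for m n
  proof
    assume "c m = c n"
    moreover have "c m \<in> Fb n" unfolding Fb_def using that by blast
    ultimately show False using cnot[of n] by simp
  qed
  define col where "col g = c (inv e g)" for g
  show ?thesis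
  proof (intro exI conjI allI impI)
    show "col g < card D * card D + 1" for g unfolding col_def by (rule cbound)
    fix g h assume gh: "g \<noteq> h \<and> col g = col h"
    define m where "m = inv e g"
    define n where "n = inv e h"
    have em: "e m = g" "e n = h" unfolding m_def n_def using surj_f_inv_f[OF bij_is_surj[OF bij]] by auto
    have "m \<noteq> n" using gh em by auto
    have cc: "c m = c n" using gh unfolding col_def m_def n_def by simp
    show "(\<lambda>d. d+g)`D \<inter> (\<lambda>d. d+h)`D = {}"
    proof (rule ccontr)
      assume ne: "(\<lambda>d. d+g)`D \<inter> (\<lambda>d. d+h)`D \<noteq> {}"
      then have "conf (e m) (e n)" "conf (e n) (e m)" unfolding conf_def em by (auto simp: Int_commute)
      then show False using cdiff cc \<open>m \<noteq> n\<close> by (metis linorder_neqE_nat)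
    qed
  qed
qed

lemma flow_top: "G_flow X act \<Longrightarrow> x \<in> topspace X \<Longrightarrow> act g x \<in> topspace X"
  unfolding G_flow_def continuous_map_def by blast

lemma flow_add: "G_flow X act \<Longrightarrow> x \<in> topspace X \<Longrightarrow> act (g + h) x = act g (act h x)"
  unfolding G_flow_def by blast

lemma flow_zero: "G_flow X act \<Longrightarrow> x \<in> topspace X \<Longrightarrow> act 0 x = x"
  unfolding G_flow_def by blast

lemma flow_open: "G_flow X act \<Longrightarrow> openin X W \<Longrightarrow> openin X {y \<in> topspace X. act h y \<in> W}"
  unfolding G_flow_def by (blast intro: openin_continuous_map_preimage)

lemma prox_fin:
  fixes act :: "'g::group_add \<Rightarrow> 'x \<Rightarrow> 'x"
  assumes fl: "G_flow X act" and pr: "proximal_flow X act"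
    and "finite P" "P \<noteq> {}" "P \<subseteq> topspace X"
  shows "\<exists>z\<in>topspace X. \<forall>W. openin X W \<and> z \<in> W \<longrightarrow> (\<exists>g. \<forall>x\<in>P. act g x \<in> W)"
  using assms(3,4,5)
proof (induction P rule: finite_ne_induct)
  case (singleton x)
  then show ?case using flow_zero[OF fl, of x] by (intro bexI[of _ x] allI impI exI[of _ 0]) auto
next
  case (insert x0 P)
  have "P \<subseteq> topspace X" using insert.prems by simp
  then have "\<exists>z\<in>topspace X. \<forall>W. openin X W \<and> z \<in> W \<longrightarrow> (\<exists>g. \<forall>x\<in>P. act g x \<in> W)"
    by (rule insert.IH)
  then obtain z where z: "z \<in> topspace X" "\<And>W. openin X W \<Longrightarrow> z\<in>W \<Longrightarrow> (\<exists>g. \<forall>x\<in>P. act g x \<in> W)"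
    by blast
  have x0: "x0 \<in> topspace X" using insert by auto
  define B where "B W = {act g x0 | g. \<forall>x\<in>P. act g x \<in> W}" for W
  have Btop: "B W \<subseteq> topspace X" for W unfolding B_def using flow_top[OF fl x0] by auto
  have Bmono: "W \<subseteq> W' \<Longrightarrow> B W \<subseteq> B W'" for W W' unfolding B_def by blast
  have Bne: "openin X W \<Longrightarrow> z \<in> W \<Longrightarrow> B W \<noteq> {}" for W
    using z(2)[of W] unfolding B_def by blast
  define K where "K = {X closure_of B W | W. openin X W \<and> z \<in> W}"
  have "\<Inter>K \<noteq> {}"
  proof -
    have cs: "compact_space X" using fl unfolding G_flow_def by blast
    have c1: "\<forall>C\<in>K. closedin X C" unfolding K_def by auto
    have c2: "\<forall>F. finite F \<and> F \<subseteq> K \<longrightarrow> \<Inter>F \<noteq> {}"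
    proof (intro allI impI)
      fix F assume F: "finite F \<and> F \<subseteq> K"
      then have exW: "\<forall>C\<in>F. \<exists>W. openin X W \<and> z \<in> W \<and> C = X closure_of B W" unfolding K_def by blast
      obtain Wf where Wf: "\<And>C. C \<in> F \<Longrightarrow> openin X (Wf C) \<and> z \<in> Wf C \<and> C = X closure_of B (Wf C)"
        using bchoice[OF exW] by blast
      define W' where "W' = topspace X \<inter> \<Inter>(Wf ` F)"
      have oW: "openin X W'" unfolding W'_def using F Wf by (intro openin_Int_Inter) auto
      have zW: "z \<in> W'" unfolding W'_def using Wf z by auto
      have "B W' \<subseteq> \<Inter>F"
      proof
        fix y assume y: "y \<in> B W'"
        show "y \<in> \<Inter>F"
        proof
          fix C assume C: "C \<in> F"
          have "B W' \<subseteq> B (Wf C)" using C by (intro Bmono) (auto simp: W'_def)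
          also have "\<dots> \<subseteq> X closure_of B (Wf C)" using Btop by (rule closure_of_subset)
          finally show "y \<in> C" using y Wf[OF C] by auto
        qed
      qed
      then show "\<Inter>F \<noteq> {}" using Bne[OF oW zW] by blast
    qed
    have fip: "\<forall>\<U>. (\<forall>C\<in>\<U>. closedin X C) \<and> (\<forall>\<F>. finite \<F> \<and> \<F> \<subseteq> \<U> \<longrightarrow> \<Inter>\<F> \<noteq> {}) \<longrightarrow> \<Inter>\<U> \<noteq> {}"
      using cs unfolding compact_space_fip .
    show ?thesis using fip[rule_format, of K] c1 c2 by blast
  qed
  then obtain w where w: "w \<in> \<Inter>K" by blast
  have wtop: "w \<in> topspace X"
  proof -
    have "openin X (topspace X)" by simp
    then have "X closure_of B (topspace X) \<in> K" unfolding K_def using z(1) by blast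
    then have "w \<in> X closure_of B (topspace X)" using w by blast
    then show ?thesis using closure_of_subset_topspace[of X "B (topspace X)"] by blast
  qed
  have wprop: "\<exists>g. act g x0 \<in> V \<and> (\<forall>x\<in>P. act g x \<in> W)"
    if VW: "openin X V" "w \<in> V" "openin X W" "z \<in> W" for V W
  proof -
    have "X closure_of B W \<in> K" unfolding K_def using that(3,4) by blast
    then have wc: "w \<in> X closure_of B W" using w by blast
    obtain y where "y \<in> B W" "y \<in> V" using wc[unfolded in_closure_of] VW(1,2) by blast
    then show ?thesis unfolding B_def by blast
  qed
  obtain z' F where z': "z' \<in> topspace X" "F \<noteq> bot"
    "limitin X (\<lambda>g. act g w) z' F" "limitin X (\<lambda>g. act g z) z' F"
    using pr[unfolded proximal_flow_def, rule_format, OF wtop z(1)] by blast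
  show ?case
  proof (intro bexI[OF _ z'(1)] allI impI)
    fix W' assume W': "openin X W' \<and> z' \<in> W'"
    have "eventually (\<lambda>g. act g w \<in> W' \<and> act g z \<in> W') F"
      using z'(3,4) W' unfolding limitin_def by (auto intro: eventually_conj)
    then obtain h where h: "act h w \<in> W'" "act h z \<in> W'"
      using z'(2) eventually_happens by blast
    let ?V = "{y \<in> topspace X. act h y \<in> W'}"
    have oV: "openin X ?V" using flow_open[OF fl] W' by blast
    obtain g where g: "act g x0 \<in> ?V" "\<forall>x\<in>P. act g x \<in> ?V"
    proof -
      have "w \<in> ?V" "z \<in> ?V" using h wtop z(1) by auto
      from wprop[OF oV this(1) oV this(2)] show ?thesis using that by blast
    qed
    show "\<exists>g. \<forall>x\<in>insert x0 P. act g x \<in> W'"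
    proof (intro exI[of _ "h + g"] ballI)
      fix x assume "x \<in> insert x0 P"
      then have "x \<in> topspace X" "act g x \<in> ?V" using g insert.prems by auto
      then show "act (h + g) x \<in> W'" using flow_add[OF fl] by auto
    qed
  qed
qed

lemma fip_U:
  fixes act :: "'g::group_add \<Rightarrow> 'x \<Rightarrow> 'x"
  assumes fl: "G_flow X act" and mi: "minimal_flow X act" and pr: "proximal_flow X act"
    and P: "finite P" "P \<subseteq> topspace X" and U: "openin X U" "U \<noteq> {}"
  shows "\<exists>g. \<forall>x\<in>P. act g x \<in> U"
proof (cases "P = {}")
  case True then show ?thesis by auto
next
  case False
  obtain z where z: "z \<in> topspace X" "\<And>W. openin X W \<Longrightarrow> z\<in>W \<Longrightarrow> (\<exists>g. \<forall>x\<in>P. act g x \<in> W)"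
    using prox_fin[OF fl pr P(1) False P(2)] by blast
  obtain u where u: "u \<in> U" using U by blast
  have "u \<in> X closure_of (range (\<lambda>g. act g z))"
    using mi z(1) u openin_subset[OF U(1)] unfolding minimal_flow_def by blast
  then obtain h where h: "act h z \<in> U" using U(1) u unfolding in_closure_of by blast
  let ?W = "{y \<in> topspace X. act h y \<in> U}"
  obtain g where g: "\<forall>x\<in>P. act g x \<in> ?W" using z(2)[OF flow_open[OF fl U(1)]] h z(1) by auto
  show ?thesis
  proof (intro exI[of _ "h + g"] ballI)
    fix x assume "x \<in> P"
    then show "act (h + g) x \<in> U" using g P(2) flow_add[OF fl] by auto
  qed
qed

lemma sep_cov:
  fixes act :: "'g::group_add \<Rightarrow> 'x \<Rightarrow> 'x"
  assumes cG: "countable (UNIV :: 'g set)" "infinite (UNIV :: 'g set)"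
    and fl: "G_flow X act" and mi: "minimal_flow X act" and pr: "proximal_flow X act"
  shows "separated_covering X act"
  unfolding separated_covering_def
proof (intro allI impI)
  fix D :: "'g set" and U
  assume DU: "finite D \<and> openin X U \<and> U \<noteq> {}"
  obtain N col where col0: "\<forall>g. col g < (N::nat)"
    "\<forall>g h. g \<noteq> h \<and> col g = col h \<longrightarrow> (\<lambda>d. d+g)`D \<inter> (\<lambda>d. d+h)`D = {}"
  proof -
    have "\<exists>N (col::'g\<Rightarrow>nat). (\<forall>g. col g < N) \<and>
           (\<forall>g h. g \<noteq> h \<and> col g = col h \<longrightarrow> (\<lambda>d. d+g)`D \<inter> (\<lambda>d. d+h)`D = {})"
      by (rule coloring[OF cG]) (use DU in blast)
    then show ?thesis by (elim exE conjE) (rule that; assumption)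
  qed
  have col: "\<And>g. col g < N"
    "\<And>g h. g \<noteq> h \<Longrightarrow> col g = col h \<Longrightarrow> (\<lambda>d. d+g)`D \<inter> (\<lambda>d. d+h)`D = {}"
    using col0 by blast+
  have "\<exists>k<N. \<forall>x\<in>topspace X. \<exists>s. col s = k \<and> act s x \<in> U"
  proof (rule ccontr)
    assume neg: "\<not> ?thesis"
    have "\<exists>x. k < N \<longrightarrow> x \<in> topspace X \<and> (\<forall>s. col s = k \<longrightarrow> act s x \<notin> U)" for k
    proof (cases "k < N")
      case True
      then have "\<not> (\<forall>x\<in>topspace X. \<exists>s. col s = k \<and> act s x \<in> U)" using neg by blast
      then show ?thesis by blast
    qed simp
    then have exk: "\<forall>k. \<exists>x. k < N \<longrightarrow> x \<in> topspace X \<and> (\<forall>s. col s = k \<longrightarrow> act s x \<notin> U)" by (rule allI)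
    obtain xk where xk0: "\<forall>k. k < N \<longrightarrow> xk k \<in> topspace X \<and> (\<forall>s. col s = k \<longrightarrow> act s (xk k) \<notin> U)"
      using choice[OF exk] by (elim exE) (rule that)
    have xk: "\<And>k. k < N \<Longrightarrow> xk k \<in> topspace X \<and> (\<forall>s. col s = k \<longrightarrow> act s (xk k) \<notin> U)"
      using xk0 by blast
    have "finite (xk ` {..<N})" by simp
    moreover have "xk ` {..<N} \<subseteq> topspace X" using xk by blast
    ultimately obtain g where g: "\<forall>x\<in>xk ` {..<N}. act g x \<in> U"
      using fip_U[OF fl mi pr, of "xk ` {..<N}" U] DU by blast
    have "xk (col g) \<in> xk ` {..<N}" using col(1)[of g] by simp
    then have "act g (xk (col g)) \<in> U" using g by blast
    moreover have "act g (xk (col g)) \<notin> U" using xk[OF col(1)[of g]] by blast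
    ultimately show False by blast
  qed
  then obtain k where k: "\<forall>x\<in>topspace X. \<exists>s. col s = k \<and> act s x \<in> U" by blast
  define S where "S = {s. col s = k}"
  show "\<exists>S. separated D S \<and> (\<Union>s\<in>S. act (- s) ` U) = topspace X"
  proof (intro exI conjI)
    show "separated D S" unfolding separated_def S_def using col(2) by auto
    show "(\<Union>s\<in>S. act (- s) ` U) = topspace X"
    proof
      show "(\<Union>s\<in>S. act (- s) ` U) \<subseteq> topspace X"
        using flow_top[OF fl] openin_subset DU by blast
      show "topspace X \<subseteq> (\<Union>s\<in>S. act (- s) ` U)"
      proof
        fix x assume x: "x \<in> topspace X"
        then obtain s where s: "col s = k" "act s x \<in> U" using k by blast
        have "act (- s) (act s x) = x" using flow_add[OF fl x, of "-s" s] flow_zero[OF fl x] by simp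
        then show "x \<in> (\<Union>s\<in>S. act (- s) ` U)" using s unfolding S_def by force
      qed
    qed
  qed
qed

lemma topspace_bern: "topspace (bernoulli_space A) = {x. \<forall>h. x h \<in> A}"
  unfolding bernoulli_space_def by (auto simp: PiE_iff)

lemma bern_disj:
  fixes actY :: "'g::group_add \<Rightarrow> 'x \<Rightarrow> 'x" and A :: "'a set"
  assumes cG: "countable (UNIV :: 'g set)" "infinite (UNIV :: 'g set)"
    and fl: "G_flow Y actY" and mi: "minimal_flow Y actY" and pr: "proximal_flow Y actY"
  shows "disjoint_flows (bernoulli_space A) (bernoulli_shift :: 'g \<Rightarrow> ('g \<Rightarrow> 'a) \<Rightarrow> ('g \<Rightarrow> 'a)) Y actY"
  unfolding disjoint_flows_def
proof (intro allI impI)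
  fix Z :: "(('g \<Rightarrow> 'a) \<times> 'x) set"
  assume Z: "closedin (prod_topology (bernoulli_space A) Y) Z \<and>
          (\<forall>g. \<forall>(x,y)\<in>Z. (bernoulli_shift g x, actY g y) \<in> Z) \<and>
          fst ` Z = topspace (bernoulli_space A) \<and> snd ` Z = topspace Y"
  have sc: "separated_covering Y actY" using sep_cov[OF cG fl mi pr] .
  have Zc: "closedin (prod_topology (bernoulli_space A) Y) Z" using Z by blast
  have Zi: "\<And>g x y. (x,y) \<in> Z \<Longrightarrow> (bernoulli_shift g x, actY g y) \<in> Z" using Z by blast
  have Zf: "fst ` Z = topspace (bernoulli_space A)" using Z by blast
  have Zsub: "Z \<subseteq> topspace (bernoulli_space A) \<times> topspace Y"
    using closedin_subset[OF Zc] by simp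
  show "Z = topspace (bernoulli_space A) \<times> topspace Y"
  proof
    show "Z \<subseteq> topspace (bernoulli_space A) \<times> topspace Y" by (rule Zsub)
    show "topspace (bernoulli_space A) \<times> topspace Y \<subseteq> Z"
    proof
      fix p :: "('g \<Rightarrow> 'a) \<times> 'x" assume p: "p \<in> topspace (bernoulli_space A) \<times> topspace Y"
      obtain x0 :: "'g \<Rightarrow> 'a" and y0 where p0: "p = (x0, y0)" by (cases p) simp
      have x0A: "\<forall>h. x0 h \<in> A" "y0 \<in> topspace Y" using p p0 unfolding topspace_bern by auto
      have "(x0, y0) \<in> prod_topology (bernoulli_space A) Y closure_of Z"
        unfolding in_closure_of
      proof (intro conjI allI impI)
        show "(x0, y0) \<in> topspace (prod_topology (bernoulli_space A) Y)" using p p0 by simp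
        fix T assume T: "(x0, y0) \<in> T \<and> openin (prod_topology (bernoulli_space A) Y) T"
        then obtain U V where UV: "openin (bernoulli_space A) U" "openin Y V" "x0 \<in> U" "y0 \<in> V" "U \<times> V \<subseteq> T"
          unfolding openin_prod_topology_alt by blast
        have oU: "openin (product_topology (\<lambda>_. discrete_topology A) UNIV) U"
          using UV(1) unfolding bernoulli_space_def .
        from product_topology_open_contains_basis[OF oU UV(3)]
        obtain Xs where Xs: "x0 \<in> (\<Pi>\<^sub>E i\<in>UNIV. Xs i)" "\<forall>i. openin (discrete_topology A) (Xs i)"
          "finite {i. Xs i \<noteq> topspace (discrete_topology A)}" "(\<Pi>\<^sub>E i\<in>UNIV. Xs i) \<subseteq> U"
          by (elim exE conjE) (rule that)
        define D where "D = {i. Xs i \<noteq> A}"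
        have finD: "finite D" using Xs(3) unfolding D_def by simp
        have XsA: "Xs i \<subseteq> A" for i using openin_subset[of "discrete_topology A" "Xs i"] Xs(2) by simp
        have x0Xs: "x0 i \<in> Xs i" for i using Xs(1) by auto
        obtain S where S: "separated D S" "(\<Union>s\<in>S. actY (- s) ` V) = topspace Y"
        proof -
          have "V \<noteq> {}" using UV(4) by blast
          then have "\<exists>S. separated D S \<and> (\<Union>s\<in>S. actY (- s) ` V) = topspace Y"
            using sc[unfolded separated_covering_def, rule_format, of D V] finD UV(2) by blast
          then show ?thesis using that by blast
        qed
        define xs where "xs h = (if \<exists>s\<in>S. h + - s \<in> D then x0 (h + - (SOME s. s\<in>S \<and> h + - s \<in> D)) else x0 h)" for h
        have xsA: "xs h \<in> A" for h unfolding xs_def using x0A by auto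
        then have "xs \<in> topspace (bernoulli_space A)" using topspace_bern by auto
        then have "xs \<in> fst ` Z" using Zf by simp
        then obtain q where q: "q \<in> Z" "xs = fst q" by blast
        define ys where "ys = snd q"
        have xys: "(xs, ys) \<in> Z" using q unfolding ys_def by simp
        then have "ys \<in> topspace Y" using Zsub by auto
        then obtain s w where sw: "s \<in> S" "w \<in> V" "ys = actY (- s) w" using S(2) by blast
        have wtop: "w \<in> topspace Y" using sw UV(2) openin_subset by blast
        have "actY s ys = w" using sw flow_add[OF fl wtop, of s "-s"] flow_zero[OF fl wtop] by simp
        moreover have "bernoulli_shift s xs \<in> U"
        proof -
          have "xs (h + s) \<in> Xs h" for h
          proof (cases "h \<in> D")
            case True
            have ex: "\<exists>s'. s'\<in>S \<and> (h + s) + - s' \<in> D" using True sw(1) by (auto simp: add.assoc)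
            define s' where "s' = (SOME s'. s'\<in>S \<and> (h + s) + - s' \<in> D)"
            have s': "s' \<in> S" "(h + s) + - s' \<in> D" using someI_ex[OF ex] unfolding s'_def by auto
            have eq: "((h + s) + - s') + s' = h + s" by (simp add: add.assoc)
            have "s' = s"
            proof (rule ccontr)
              assume "s' \<noteq> s"
              then have "(\<lambda>d. d + s') ` D \<inter> (\<lambda>d. d + s) ` D = {}" using S(1) s' sw(1) unfolding separated_def by blast
              moreover have "h + s \<in> (\<lambda>d. d + s') ` D" using s'(2) eq by (metis image_eqI)
              moreover have "h + s \<in> (\<lambda>d. d + s) ` D" using True by blast
              ultimately show False by blast
            qed
            have ex2: "\<exists>t\<in>S. (h + s) + - t \<in> D" using True sw(1) by (intro bexI[of _ s]) (simp_all add: add.assoc)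
            have "xs (h + s) = x0 ((h + s) + - s')" unfolding xs_def s'_def by (simp only: ex2 if_True)
            also have "\<dots> = x0 h" using \<open>s' = s\<close> by (simp add: add.assoc)
            finally have "xs (h + s) = x0 h" .
            then show ?thesis using x0Xs by simp
          next
            case False
            then show ?thesis using xsA unfolding D_def by auto
          qed
          then have "bernoulli_shift s xs \<in> (\<Pi>\<^sub>E i\<in>UNIV. Xs i)" unfolding bernoulli_shift_def by auto
          then show ?thesis using Xs(4) by blast
        qed
        moreover have "(bernoulli_shift s xs, actY s ys) \<in> Z" using Zi[OF xys] .
        ultimately show "\<exists>y. y \<in> Z \<and> y \<in> T" using sw(2) UV(5) by blast
      qed
      then show "p \<in> Z" using p0 closure_of_closedin[OF Zc] by simp
    qed
  qed
qed

theorem corollary4p5: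
  fixes A :: "'a set" and X :: "'x topology" and act :: "'g::group_add \<Rightarrow> 'x \<Rightarrow> 'x"
  assumes "countable (UNIV :: 'g set)" and "infinite (UNIV :: 'g set)"
    and "finite A"
  shows "(\<forall>(Y :: 'x topology) actY. G_flow Y actY \<and> minimal_flow Y actY \<and> proximal_flow Y actY
            \<longrightarrow> disjoint_flows (bernoulli_space A) (bernoulli_shift :: 'g \<Rightarrow> ('g \<Rightarrow> 'a) \<Rightarrow> ('g \<Rightarrow> 'a)) Y actY)
       \<and> (G_flow X act \<and> minimal_flow X act \<and> proximal_flow X act \<longrightarrow> separated_covering X act)"
  using bern_disj[OF assms(1,2)] sep_cov[OF assms(1,2)] by blast

end
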